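(* Let $q$ be prime and let $S$ be the $k\times 2n$ generator matrix over $\mathbb{Z}_q$ of a stabilizer code on $n$ qudits with $k$ generators, and let $M\in\mathbb{Z}^{k\times 2n}$ be its invariant form. Then there exist integer vectors $\bar X_1,\dots,\bar X_{n-k},\bar Z_1,\dots,\bar Z_{n-k}\in\mathbb{Z}^{2n}$ such that (i) their reductions mod $q$ form a complete set of logical operators of the code, i.e. they commute mod $q$ with all rows of $S$, are independent of the stabilizers, and satisfy $\bar X_i\odot\bar Z_j\equiv\delta_{ij}$, $\bar X_i\odot\bar X_j\equiv\bar Z_i\odot\bar Z_j\equiv 0 \pmod q$ for all $i,j$; and (ii) each of them has symplectic product exactly $0$ over $\mathbb{Z}$ with every row of $M$. Moreover, constructing them does not change $M$.
   Context: $n$-qudit Paulis over $q$ levels are represented (up to phase) by exponent vectors $(a|b)\in\mathbb{Z}_q^{2n}$; integer lifts are in $\mathbb{Z}^{2n}$. Symplectic product: $u\odot v=\sum_{l=1}^n (v_{z,l}u_{x,l}-v_{x,l}u_{z,l})$, computed mod $q$ or over $\mathbb{Z}$. Two Paulis commute iff their symplectic product is $0 \bmod q$. Logical operators are elements of the normalizer of the stabilizer group not in the stabilizer group. An invariant form of $S$ is an integer matrix $M\equiv S\pmod q$ whose rows have pairwise integer symplectic product $0$ (obtained from the canonical form $(I_k\ X_2|Z_1\ Z_2)$ by adding to $Z_1$ the strictly lower triangular matrix $L$ with $L_{ij}=\phi(s_i)\odot\phi(s_j)$ over $\mathbb{Z}$ for $i>j$). *)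

theory Defs
  imports Main "HOL-Number_Theory.Cong"
begin

text \<open>A vector in Z^{2n} (or an integer lift of a vector in Z_q^{2n}) is a
  function v :: nat => int, of which only the components 0..2n-1 are relevant:
  components 0..n-1 form the X-part, components n..2n-1 form the Z-part.
  A k x 2n matrix is a function nat => nat => int (row index, column index).\<close>

type_synonym ivec = "nat \<Rightarrow> int"
type_synonym imat = "nat \<Rightarrow> nat \<Rightarrow> int"

definition sympl :: "nat \<Rightarrow> ivec \<Rightarrow> ivec \<Rightarrow> int" where
  "sympl n u v = (\<Sum>l<n. v (n + l) * u l - v l * u (n + l))"

definition zq_matrix :: "int \<Rightarrow> nat \<Rightarrow> nat \<Rightarrow> imat \<Rightarrow> bool" where
  "zq_matrix q k n S \<longleftrightarrow> (\<forall>i<k. \<forall>c<2*n. 0 \<le> S i c \<and> S i c < q)"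

definition rows_independent_mod :: "int \<Rightarrow> nat \<Rightarrow> nat \<Rightarrow> imat \<Rightarrow> bool" where
  "rows_independent_mod q k n S \<longleftrightarrow>
     (\<forall>a :: nat \<Rightarrow> int. (\<forall>c<2*n. [(\<Sum>i<k. a i * S i c) = 0] (mod q))
        \<longrightarrow> (\<forall>i<k. [a i = 0] (mod q)))"

definition stabilizer_generator_matrix :: "int \<Rightarrow> nat \<Rightarrow> nat \<Rightarrow> imat \<Rightarrow> bool" where
  "stabilizer_generator_matrix q k n S \<longleftrightarrow>
     zq_matrix q k n S \<and> rows_independent_mod q k n S \<and>
     (\<forall>i<k. \<forall>j<k. [sympl n (S i) (S j) = 0] (mod q))"

text \<open>Canonical form (I_k X_2 | Z_1 Z_2): the first k columns of the X-part are I_k.\<close>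
definition canonical_form :: "nat \<Rightarrow> nat \<Rightarrow> imat \<Rightarrow> bool" where
  "canonical_form k n S \<longleftrightarrow> (\<forall>i<k. \<forall>j<k. S i j = (if i = j then 1 else 0))"

text \<open>Invariant form: add to Z_1 the strictly lower triangular matrix L with
  L_ij = phi(s_i) . phi(s_j) (over Z) for i > j. Z_1 occupies columns n+j, j<k.\<close>
definition invariant_form :: "nat \<Rightarrow> nat \<Rightarrow> imat \<Rightarrow> imat" where
  "invariant_form k n S = (\<lambda>i c.
     if n \<le> c \<and> c - n < k \<and> c - n < i then S i c + sympl n (S i) (S (c - n)) else S i c)"

definition complete_logicals ::
  "int \<Rightarrow> nat \<Rightarrow> nat \<Rightarrow> imat \<Rightarrow> imat \<Rightarrow> imat \<Rightarrow> bool" where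
  "complete_logicals q k n S Xb Zb \<longleftrightarrow>
     \<comment> \<open>commute mod q with all stabilizer generators\<close>
     (\<forall>i<n-k. \<forall>r<k. [sympl n (Xb i) (S r) = 0] (mod q) \<and> [sympl n (Zb i) (S r) = 0] (mod q)) \<and>
     \<comment> \<open>independent of the stabilizers: no nontrivial Z_q-combination lies in the stabilizer span\<close>
     (\<forall>a b c :: nat \<Rightarrow> int.
        (\<forall>col<2*n. [(\<Sum>i<n-k. a i * Xb i col + b i * Zb i col) = (\<Sum>r<k. c r * S r col)] (mod q))
        \<longrightarrow> (\<forall>i<n-k. [a i = 0] (mod q) \<and> [b i = 0] (mod q))) \<and>
     \<comment> \<open>canonical symplectic relations\<close>
     (\<forall>i<n-k. \<forall>j<n-k.
        [sympl n (Xb i) (Zb j) = (if i = j then 1 else 0)] (mod q) \<and>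
        [sympl n (Xb i) (Xb j) = 0] (mod q) \<and>
        [sympl n (Zb i) (Zb j) = 0] (mod q))"

end

theory Submission
  imports Defs
begin

definition XB :: "nat \<Rightarrow> nat \<Rightarrow> imat \<Rightarrow> imat" where
  "XB k n S i c = (if c = k + i then 1 else if n \<le> c \<and> c < n + k then S (c - n) (n + k + i) else 0)"

definition ZB :: "nat \<Rightarrow> nat \<Rightarrow> imat \<Rightarrow> imat" where
  "ZB k n S i c = (if c = n + k + i then 1 else if n \<le> c \<and> c < n + k then - S (c - n) (k + i) else 0)"

lemma sum_lt_restrict:
  fixes k n :: nat
  assumes "k \<le> n"
  shows "(\<Sum>l<n. if l < k then f l else (0::int)) = (\<Sum>l<k. f l)"
proof -
  have "{..<n} \<inter> {l. l < k} = {..<k}" using assms by auto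
  then show ?thesis by (simp add: sum.If_cases)
qed

lemma sympl_X:
  assumes "k + i < n"
  shows "sympl n (XB k n S i) v = v (n+k+i) - (\<Sum>l<k. v l * S l (n+k+i))"
proof -
  have "sympl n (XB k n S i) v = (\<Sum>l<n. (if l = k + i then v (n+l) else 0) - (if l < k then v l * S l (n+k+i) else 0))"
    unfolding sympl_def XB_def using assms by (intro sum.cong) auto
  also have "\<dots> = (\<Sum>l<n. if l = k + i then v (n+l) else 0) - (\<Sum>l<n. if l < k then v l * S l (n+k+i) else 0)"
    by (simp add: sum_subtractf)
  also have "\<dots> = v (n+k+i) - (\<Sum>l<k. v l * S l (n+k+i))"
    using assms by (simp add: sum_lt_restrict add.assoc)
  finally show ?thesis .
qed

lemma sympl_Z:
  assumes "k + i < n"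
  shows "sympl n (ZB k n S i) v = - (v (k+i) - (\<Sum>l<k. v l * S l (k+i)))"
proof -
  have "sympl n (ZB k n S i) v = (\<Sum>l<n. - ((if l = k + i then v l else 0) - (if l < k then v l * S l (k+i) else 0)))"
    unfolding sympl_def ZB_def using assms by (intro sum.cong) auto
  also have "\<dots> = - ((\<Sum>l<n. if l = k + i then v l else 0) - (\<Sum>l<n. if l < k then v l * S l (k+i) else 0))"
    by (simp add: sum_subtractf sum_negf)
  also have "\<dots> = - (v (k+i) - (\<Sum>l<k. v l * S l (k+i)))"
    using assms by (simp add: sum_lt_restrict)
  finally show ?thesis .
qed


lemma sum_delta_k:
  fixes k :: nat and r :: nat
  assumes "r < k" and "\<And>l. l < k \<Longrightarrow> v l = (if r = l then 1 else 0)"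
  shows "(\<Sum>l<k. v l * g l) = (g r :: int)"
proof -
  have "(\<Sum>l<k. v l * g l) = (\<Sum>l<k. if r = l then g l else 0)"
    using assms(2) by (intro sum.cong) auto
  also have "\<dots> = g r" using assms(1) by simp
  finally show ?thesis .
qed

lemma commute_X:
  assumes "k + i < n" "r < k" "\<And>l. l < k \<Longrightarrow> v l = (if r = l then 1 else 0)"
    and "v (n+k+i) = S r (n+k+i)"
  shows "sympl n (XB k n S i) v = 0"
proof -
  have "(\<Sum>l<k. v l * S l (n+k+i)) = S r (n+k+i)"
    by (rule sum_delta_k) (use assms in auto)
  then show ?thesis using assms by (simp add: sympl_X)
qed

lemma commute_Z:
  assumes "k + i < n" "r < k" "\<And>l. l < k \<Longrightarrow> v l = (if r = l then 1 else 0)"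
    and "v (k+i) = S r (k+i)"
  shows "sympl n (ZB k n S i) v = 0"
proof -
  have "(\<Sum>l<k. v l * S l (k+i)) = S r (k+i)"
    by (rule sum_delta_k) (use assms in auto)
  then show ?thesis using assms by (simp add: sympl_Z)
qed

theorem lemma2:
  fixes q :: int and k n :: nat and S :: imat
  assumes "prime q"
    and "k \<le> n"
    and "stabilizer_generator_matrix q k n S"
    and "canonical_form k n S"
  shows "\<exists>Xb Zb :: imat.
           complete_logicals q k n S Xb Zb \<and>
           (\<forall>i<n-k. \<forall>r<k. sympl n (Xb i) (invariant_form k n S r) = 0
                          \<and> sympl n (Zb i) (invariant_form k n S r) = 0)"
proof (intro exI conjI)
  have can: "\<And>r l. r < k \<Longrightarrow> l < k \<Longrightarrow> S r l = (if r = l then 1 else 0)"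
    using assms(4) unfolding canonical_form_def by auto
  have invl: "\<And>r l. l < k \<Longrightarrow> invariant_form k n S r l = S r l"
    using assms(2) unfolding invariant_form_def by auto
  have invh: "\<And>r i. k + i < n \<Longrightarrow> invariant_form k n S r (n+k+i) = S r (n+k+i)"
    unfolding invariant_form_def by auto
  have invm: "\<And>r i. k + i < n \<Longrightarrow> invariant_form k n S r (k+i) = S r (k+i)"
    unfolding invariant_form_def by auto
  show "\<forall>i<n-k. \<forall>r<k. sympl n (XB k n S i) (invariant_form k n S r) = 0
                          \<and> sympl n (ZB k n S i) (invariant_form k n S r) = 0"
  proof (intro allI impI conjI)
    fix i r assume i: "i < n - k" and r: "r < k"
    show "sympl n (XB k n S i) (invariant_form k n S r) = 0"
      by (rule commute_X[where r=r]) (use i r can invl invh in auto)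
    show "sympl n (ZB k n S i) (invariant_form k n S r) = 0"
      by (rule commute_Z[where r=r]) (use i r can invl invm in auto)
  qed
  show "complete_logicals q k n S (XB k n S) (ZB k n S)"
    unfolding complete_logicals_def
  proof (intro conjI allI impI)
    fix i r assume i: "i < n - k" and r: "r < k"
    have "sympl n (XB k n S i) (S r) = 0"
      by (rule commute_X[where r=r]) (use i r can in auto)
    then show "[sympl n (XB k n S i) (S r) = 0] (mod q)" by simp
    have "sympl n (ZB k n S i) (S r) = 0"
      by (rule commute_Z[where r=r]) (use i r can in auto)
    then show "[sympl n (ZB k n S i) (S r) = 0] (mod q)" by simp
  next
    fix i j assume i0: "i < n - k" and j0: "j < n - k"
    have i: "k + i < n" "i < n - k" using i0 by auto
    have j: "k + j < n" "j < n - k" using j0 by auto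
    have "sympl n (XB k n S i) (ZB k n S j) = (if i = j then 1 else 0)"
    proof -
      have "(\<Sum>l<k. ZB k n S j l * S l (n+k+i)) = 0"
        using assms(2) by (intro sum.neutral) (auto simp: ZB_def)
      then show ?thesis using i j by (simp add: sympl_X ZB_def)
    qed
    then show "[sympl n (XB k n S i) (ZB k n S j) = (if i = j then 1 else 0)] (mod q)" by simp
    have "sympl n (XB k n S i) (XB k n S j) = 0"
    proof -
      have "(\<Sum>l<k. XB k n S j l * S l (n+k+i)) = 0"
        using assms(2) by (intro sum.neutral) (auto simp: XB_def)
      then show ?thesis using i j by (simp add: sympl_X XB_def)
    qed
    then show "[sympl n (XB k n S i) (XB k n S j) = 0] (mod q)" by simp
    have "sympl n (ZB k n S i) (ZB k n S j) = 0"
    proof -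
      have "(\<Sum>l<k. ZB k n S j l * S l (k+i)) = 0"
        using assms(2) by (intro sum.neutral) (auto simp: ZB_def)
      then show ?thesis using i j by (simp add: sympl_Z ZB_def)
    qed
    then show "[sympl n (ZB k n S i) (ZB k n S j) = 0] (mod q)" by simp
  next
    fix a b c :: "nat \<Rightarrow> int"
    assume h: "\<forall>col<2*n. [(\<Sum>i<n-k. a i * XB k n S i col + b i * ZB k n S i col)
                   = (\<Sum>r<k. c r * S r col)] (mod q)"
    have c0: "[c r = 0] (mod q)" if r: "r < k" for r
    proof -
      have "(\<Sum>i<n-k. a i * XB k n S i r + b i * ZB k n S i r) = 0"
        using r assms(2) by (intro sum.neutral) (auto simp: XB_def ZB_def)
      moreover have "(\<Sum>r'<k. c r' * S r' r) = c r"
      proof -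
        have "(\<Sum>r'<k. c r' * S r' r) = (\<Sum>r'<k. if r' = r then c r' else 0)"
          using r can by (intro sum.cong) auto
        then show ?thesis using r by simp
      qed
      moreover have "r < 2 * n" using r assms(2) by simp
      ultimately have "[0 = c r] (mod q)" using h by auto
      then show ?thesis by (rule cong_sym)
    qed
    have rhs0: "[(\<Sum>r<k. c r * S r col) = 0] (mod q)" for col
    proof -
      have "[(\<Sum>r<k. c r * S r col) = (\<Sum>r<k. 0 * S r col)] (mod q)"
        using c0 by (intro cong_sum cong_mult) auto
      then show ?thesis by simp
    qed
    fix i assume i: "i < n - k"
    have "(\<Sum>i'<n-k. a i' * XB k n S i' (k+i) + b i' * ZB k n S i' (k+i))
          = (\<Sum>i'<n-k. if i' = i then a i' else 0)"
      using i by (intro sum.cong) (auto simp: XB_def ZB_def)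
    also have "\<dots> = a i" using i by simp
    finally have ea: "(\<Sum>i'<n-k. a i' * XB k n S i' (k+i) + b i' * ZB k n S i' (k+i)) = a i" .
    have "(\<Sum>i'<n-k. a i' * XB k n S i' (n+k+i) + b i' * ZB k n S i' (n+k+i))
          = (\<Sum>i'<n-k. if i' = i then b i' else 0)"
      using i by (intro sum.cong) (auto simp: XB_def ZB_def)
    also have "\<dots> = b i" using i by simp
    finally have eb: "(\<Sum>i'<n-k. a i' * XB k n S i' (n+k+i) + b i' * ZB k n S i' (n+k+i)) = b i" .
    have c1: "k + i < 2 * n" "n + k + i < 2 * n" using i by auto
    have "[a i = (\<Sum>r<k. c r * S r (k+i))] (mod q)"
      using h[rule_format, OF c1(1)] unfolding ea .
    moreover have "[b i = (\<Sum>r<k. c r * S r (n+k+i))] (mod q)"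
      using h[rule_format, OF c1(2)] unfolding eb .
    ultimately have "[a i = (\<Sum>r<k. c r * S r (k+i))] (mod q)" "[b i = (\<Sum>r<k. c r * S r (n+k+i))] (mod q)"
      by auto
    then show "[a i = 0] (mod q)" "[b i = 0] (mod q)"
      using rhs0 cong_trans by blast+
  qed
qed

end
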